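(* Let $m,n\ge 2$, $P=\mathbb{R}^{m\times n}$, and let $G:P\times\mathbb{R}\to P$ be a smooth one-parameter family such that $G(\cdot,\lambda)$ is admissible for the influence network $\mathcal{N}_{mn}$ for every $\lambda$. Suppose $z_0\in V_{\rm s}$ and $G(z_0,\lambda_0)=0$, and that the kernel of the Jacobian $D_zG(z_0,\lambda_0)$ is the consensus subspace $V_{\rm c}$ (a consensus synchrony-breaking steady-state bifurcation from a fully synchronous equilibrium). Then, generically, for every $k$ with $1\le k\le n-1$ there is a branch of equilibria bifurcating from $(z_0,\lambda_0)$ corresponding to the axial subgroup $\mathbf{1}\times(\mathbf{S}_k\times\mathbf{S}_{n-k})$ of $\mathbf{S}_m\times\mathbf{S}_n$. These solution branches are tangent to $V_{\rm c}$, lie in the subspace $\mathrm{Fix}(\mathbf{S}_m\times\mathbf{1})=V_{\rm c}\oplus V_{\rm s}$, and are consensus solutions (all rows of the array are identical).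
   Context: $P$ is the space of real $m\times n$ arrays $z=(z_{ij})$ ($z_{ij}$ is the value agent $i$ assigns to option $j$), with $\Gamma=\mathbf{S}_m\times\mathbf{S}_n$ acting by $((\sigma,\tau)z)_{ij}=z_{\sigma^{-1}(i)\,\tau^{-1}(j)}$. For a subgroup $H\subseteq\Gamma$, $\mathrm{Fix}(H)=\{z\in P:hz=z\ \forall h\in H\}$. Admissibility: a map $F:P\to P$ is admissible for $\mathcal{N}_{mn}$ if there is a single function $g$, independent of $(i,j)$, with $F_{ij}(z)=g(z_{ij},z_{A_{ij}},z_{O_{ij}},z_{E_{ij}})$, where $A_{ij}=\{(i,l):l\ne j\}$, $O_{ij}=\{(k,j):k\ne i\}$, $E_{ij}=\{(k,l):k\ne i,l\ne j\}$, and $g$ is invariant under permutations of the arguments within each of these three groups; admissible maps are $\Gamma$-equivariant. Subspaces: $V_{\rm s}$ = arrays with all entries equal; $V_{\rm c}$ = arrays with all rows identical and each row summing to $0$; $V_{\rm dl}$ = arrays with all columns identical and each column summing to $0$; $V_{\rm d}$ = arrays all of whose rows and columns sum to $0$; $P=V_{\rm s}\oplus V_{\rm c}\oplus V_{\rm dl}\oplus V_{\rm d}$. A branch "corresponds to the axial subgroup $\Sigma$" if its equilibria have isotropy subgroup $\Sigma$ (up to conjugacy); here $\Sigma$ is axial on $V_{\rm c}$, i.e. $\dim(\mathrm{Fix}(\Sigma)\cap V_{\rm c})=1$. "Generically" means for generic admissible families $G$ satisfying the stated hypotheses. *)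

theory Defs
  imports "HOL-Analysis.Analysis" "HOL-Library.Multiset"
begin

text \<open>Arrays z = (z_ij): rows indexed by agents 'm, columns by options 'n.
  Entry z_ij is  z $ i $ j.\<close>
type_synonym ('m, 'n) arr = "(real ^ 'n) ^ 'm"

fun iter_dderiv :: "'a list \<Rightarrow> ('a::real_normed_vector \<Rightarrow> 'b::real_normed_vector) \<Rightarrow> 'a \<Rightarrow> 'b" where
  "iter_dderiv [] f = f"
| "iter_dderiv (v # vs) f = (\<lambda>x. frechet_derivative (iter_dderiv vs f) (at x) v)"

text \<open>f is smooth iff all iterated directional (Frechet) derivatives exist and are
  differentiable everywhere (on finite-dimensional spaces this is C-infinity).\<close>
definition smooth_map :: "('a::real_normed_vector \<Rightarrow> 'b::real_normed_vector) \<Rightarrow> bool" where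
  "smooth_map f \<longleftrightarrow> (\<forall>vs x. iter_dderiv vs f differentiable (at x))"

definition Gamma :: "(('m::finite \<Rightarrow> 'm) \<times> ('n::finite \<Rightarrow> 'n)) set" where
  "Gamma = {(\<sigma>, \<tau>). \<sigma> permutes UNIV \<and> \<tau> permutes UNIV}"

definition act :: "('m::finite \<Rightarrow> 'm) \<times> ('n::finite \<Rightarrow> 'n) \<Rightarrow> ('m, 'n) arr \<Rightarrow> ('m, 'n) arr" where
  "act h z = (\<chi> i j. z $ (inv (fst h) i) $ (inv (snd h) j))"

definition Fix :: "(('m::finite \<Rightarrow> 'm) \<times> ('n::finite \<Rightarrow> 'n)) set \<Rightarrow> ('m, 'n) arr set" where
  "Fix H = {z. \<forall>h\<in>H. act h z = z}"

definition isotropy :: "('m::finite, 'n::finite) arr \<Rightarrow> (('m \<Rightarrow> 'm) \<times> ('n \<Rightarrow> 'n)) set" where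
  "isotropy z = {h \<in> Gamma. act h z = z}"

definition rowperm_sub :: "(('m::finite \<Rightarrow> 'm) \<times> ('n::finite \<Rightarrow> 'n)) set" where
  "rowperm_sub = {(\<sigma>, \<tau>). \<sigma> permutes UNIV \<and> \<tau> = id}"

text \<open>1 x (S_K x S_{K^c}) (a copy of 1 x (S_k x S_(n-k)) when card K = k)\<close>
definition axial_sub :: "'n::finite set \<Rightarrow> (('m::finite \<Rightarrow> 'm) \<times> ('n \<Rightarrow> 'n)) set" where
  "axial_sub K = {(\<sigma>, \<tau>). \<sigma> = id \<and> \<tau> permutes UNIV \<and> \<tau> ` K = K}"

definition full_axial_sub :: "'n::finite set \<Rightarrow> (('m::finite \<Rightarrow> 'm) \<times> ('n \<Rightarrow> 'n)) set" where
  "full_axial_sub K = {(\<sigma>, \<tau>). \<sigma> permutes UNIV \<and> \<tau> permutes UNIV \<and> \<tau> ` K = K}"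

definition Vs :: "('m::finite, 'n::finite) arr set" where
  "Vs = {z. \<forall>i j k l. z $ i $ j = z $ k $ l}"

definition Vc :: "('m::finite, 'n::finite) arr set" where
  "Vc = {z. (\<forall>i k. z $ i = z $ k) \<and> (\<forall>i. (\<Sum>j\<in>UNIV. z $ i $ j) = 0)}"

definition Vdl :: "('m::finite, 'n::finite) arr set" where
  "Vdl = {z. (\<forall>i j l. z $ i $ j = z $ i $ l) \<and> (\<forall>j. (\<Sum>i\<in>UNIV. z $ i $ j) = 0)}"

definition Vd :: "('m::finite, 'n::finite) arr set" where
  "Vd = {z. (\<forall>i. (\<Sum>j\<in>UNIV. z $ i $ j) = 0) \<and> (\<forall>j. (\<Sum>i\<in>UNIV. z $ i $ j) = 0)}"

definition consensus :: "('m::finite, 'n::finite) arr \<Rightarrow> bool" where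
  "consensus z \<longleftrightarrow> (\<forall>i k. z $ i = z $ k)"

text \<open>F_ij(z) = g(z_ij, z_{A_ij}, z_{O_ij}, z_{E_ij}) with one g independent of (i,j),
  invariant under permutations inside each of the three argument groups; such a g is
  exactly a function of the three multisets of values.\<close>
definition admissible :: "(('m::finite, 'n::finite) arr \<Rightarrow> ('m, 'n) arr) \<Rightarrow> bool" where
  "admissible F \<longleftrightarrow>
     (\<exists>g :: real \<Rightarrow> real multiset \<Rightarrow> real multiset \<Rightarrow> real multiset \<Rightarrow> real.
        \<forall>z i j. F z $ i $ j =
          g (z $ i $ j)
            (image_mset (\<lambda>l. z $ i $ l) (mset_set {l. l \<noteq> j}))
            (image_mset (\<lambda>k. z $ k $ j) (mset_set {k. k \<noteq> i}))
            (image_mset (\<lambda>(k, l). z $ k $ l) (mset_set {(k, l). k \<noteq> i \<and> l \<noteq> j})))"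

end

theory Submission
  imports Defs
begin


lemma image_mset_perm_reindex:
  fixes t :: "'a \<Rightarrow> 'a" and f :: "'a \<Rightarrow> 'b"
  assumes "bij t" "finite (UNIV::'a set)"
  shows "image_mset (\<lambda>l. f (t l)) (mset_set {l. P l}) = image_mset f (mset_set {l. P (inv t l)})"
proof -
  have inj: "inj_on t {l. P l}" using assms bij_is_inj inj_on_subset by blast
  have img: "t ` {l. P l} = {l. P (inv t l)}"
    using assms by (auto simp: bij_inv_eq_iff image_iff) (metis bij_inv_eq_iff)+
  have "image_mset (\<lambda>l. f (t l)) (mset_set {l. P l}) = image_mset f (image_mset t (mset_set {l. P l}))"
    by (simp add: image_mset.compositionality o_def)
  also have "\<dots> = image_mset f (mset_set {l. P (inv t l)})"
    using image_mset_mset_set[OF inj] img by simp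
  finally show ?thesis .
qed

lemma admissible_equiv:
  fixes F :: "('m::finite, 'n::finite) arr \<Rightarrow> ('m, 'n) arr"
  assumes adm: "admissible F" and s: "\<sigma> permutes UNIV" and t: "\<tau> permutes UNIV"
  shows "F (act (\<sigma>, \<tau>) z) = act (\<sigma>, \<tau>) (F z)"
proof -
  obtain g where g: "\<And>z i j. F z $ i $ j =
          g (z $ i $ j)
            (image_mset (\<lambda>l. z $ i $ l) (mset_set {l. l \<noteq> j}))
            (image_mset (\<lambda>k. z $ k $ j) (mset_set {k. k \<noteq> i}))
            (image_mset (\<lambda>(k, l). z $ k $ l) (mset_set {(k, l). k \<noteq> i \<and> l \<noteq> j}))"
    using adm unfolding admissible_def by blast
  let ?s = "inv \<sigma>" and ?t = "inv \<tau>"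
  have bs: "bij ?s" and bt: "bij ?t"
    using s t by (simp_all add: bij_imp_bij_inv permutes_bij)
  have is_: "inv ?s = \<sigma>" and it: "inv ?t = \<tau>"
    using s t by (simp_all add: inv_inv_eq permutes_bij)
  have bp: "bij (map_prod ?s ?t)" using bij_betw_map_prod[OF bs bt] by simp
  have ip: "inv (map_prod ?s ?t) = map_prod \<sigma> \<tau>"
    using s t by (intro inv_unique_comp) (auto simp: fun_eq_iff permutes_inverses)
  show ?thesis
  proof (subst vec_eq_iff, intro allI, subst vec_eq_iff, intro allI)
    fix i j
    have e1: "image_mset (\<lambda>l. z $ ?s i $ ?t l) (mset_set {l. l \<noteq> j})
        = image_mset (\<lambda>l. z $ ?s i $ l) (mset_set {l. l \<noteq> ?t j})"
    proof -
      have "\<And>l. (\<tau> l \<noteq> j) = (l \<noteq> ?t j)" using permutes_inv_eq[OF t] by metis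
      then show ?thesis
        using image_mset_perm_reindex[OF bt, of "\<lambda>l. z $ ?s i $ l" "\<lambda>l. l \<noteq> j"] it by simp
    qed
    have e2: "image_mset (\<lambda>k. z $ ?s k $ ?t j) (mset_set {k. k \<noteq> i})
        = image_mset (\<lambda>k. z $ k $ ?t j) (mset_set {k. k \<noteq> ?s i})"
    proof -
      have "\<And>l. (\<sigma> l \<noteq> i) = (l \<noteq> ?s i)" using permutes_inv_eq[OF s] by metis
      then show ?thesis
        using image_mset_perm_reindex[OF bs, of "\<lambda>k. z $ k $ ?t j" "\<lambda>k. k \<noteq> i"] is_ by simp
    qed
    have e3: "image_mset (\<lambda>(k, l). z $ ?s k $ ?t l) (mset_set {(k, l). k \<noteq> i \<and> l \<noteq> j})
        = image_mset (\<lambda>(k, l). z $ k $ l) (mset_set {(k, l). k \<noteq> ?s i \<and> l \<noteq> ?t j})"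
    proof -
      have "image_mset (\<lambda>(k, l). z $ ?s k $ ?t l) (mset_set {(k, l). k \<noteq> i \<and> l \<noteq> j})
          = image_mset (\<lambda>kl. (\<lambda>(k, l). z $ k $ l) (map_prod ?s ?t kl)) (mset_set {kl. (\<lambda>(k,l). k \<noteq> i \<and> l \<noteq> j) kl})"
        by (intro arg_cong2[where f=image_mset]) (auto simp: fun_eq_iff)
      also have "\<dots> = image_mset (\<lambda>(k, l). z $ k $ l) (mset_set {kl. (\<lambda>(k,l). k \<noteq> i \<and> l \<noteq> j) (inv (map_prod ?s ?t) kl)})"
        by (rule image_mset_perm_reindex[OF bp]) simp
      also have "{kl. (\<lambda>(k,l). k \<noteq> i \<and> l \<noteq> j) (inv (map_prod ?s ?t) kl)} = {(k, l). k \<noteq> ?s i \<and> l \<noteq> ?t j}"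
        using permutes_inv_eq[OF s] permutes_inv_eq[OF t] permutes_inverses[OF s] permutes_inverses[OF t] by (auto simp: ip) (metis permutes_inverses(2) s t)+
      finally show ?thesis .
    qed
    show "F (act (\<sigma>, \<tau>) z) $ i $ j = act (\<sigma>, \<tau>) (F z) $ i $ j"
      unfolding act_def using e1 e2 e3 by (simp add: g[of "\<chi> i j. z $ ?s i $ ?t j"] g[of z])
  qed
qed



definition Epat :: "'n::finite set \<Rightarrow> real \<Rightarrow> real \<Rightarrow> ('m::finite, 'n) arr" where
  "Epat K p q = (\<chi> i j. if j \<in> K then p else q)"

lemma Epat_nth [simp]: "Epat K p q $ i $ j = (if j \<in> K then p else q)"
  by (simp add: Epat_def)

lemma act_Epat:
  assumes t: "\<tau> permutes UNIV" and K: "\<And>j. (inv \<tau> j \<in> K) = (j \<in> K)"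
  shows "act (\<sigma>, \<tau>) (Epat K p q) = Epat K p q"
  using K by (simp add: act_def Epat_def)

lemma adm_pattern:
  fixes F :: "('m::finite, 'n::finite) arr \<Rightarrow> ('m, 'n) arr"
  assumes adm: "admissible F" and jj: "(j \<in> K) = (j' \<in> K)"
  shows "F (Epat K p q) $ i $ j = F (Epat K p q) $ i' $ j'"
proof -
  let ?s = "Transposition.transpose i i'" and ?t = "Transposition.transpose j j'"
  have s: "?s permutes UNIV" and t: "?t permutes UNIV" by (simp_all add: permutes_swap_id)
  have K: "(inv ?t l \<in> K) = (l \<in> K)" for l
    by (cases "l = j"; cases "l = j'") (use jj in auto)
  have "F (Epat K p q) = F (act (?s, ?t) (Epat K p q))"
    by (subst act_Epat[OF t K]) (rule refl)
  also have "\<dots> = act (?s, ?t) (F (Epat K p q))"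
    by (rule admissible_equiv[OF adm s t])
  finally have "F (Epat K p q) $ i $ j = act (?s, ?t) (F (Epat K p q)) $ i $ j" by simp
  also have "\<dots> = F (Epat K p q) $ i' $ j'"
    by (simp add: act_def)
  finally show ?thesis .
qed

lemma Epat_sync: "Epat K s s = Epat UNIV s s"
  by (simp add: Epat_def)

lemma adm_sync:
  fixes F :: "('m::finite, 'n::finite) arr \<Rightarrow> ('m, 'n) arr"
  assumes adm: "admissible F"
  shows "F (Epat K s s) $ i $ j = F (Epat K s s) $ i' $ j'"
  using adm_pattern[OF adm, of j UNIV j' s s i i'] by (simp add: Epat_sync[of K])

lemma adm_Epat:
  fixes F :: "('m::finite, 'n::finite) arr \<Rightarrow> ('m, 'n) arr"
  assumes adm: "admissible F" and j1: "j1 \<in> K" and j2: "j2 \<notin> K"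
  shows "F (Epat K p q) = Epat K (F (Epat K p q) $ i0 $ j1) (F (Epat K p q) $ i0 $ j2)"
  unfolding vec_eq_iff using adm_pattern[OF adm] j1 j2 by auto

lemma perm_image_iff:
  assumes t: "\<tau> permutes UNIV"
  shows "(\<tau> ` K = K) \<longleftrightarrow> (\<forall>j. (inv \<tau> j \<in> K) = (j \<in> K))"
proof
  assume a: "\<tau> ` K = K"
  show "\<forall>j. (inv \<tau> j \<in> K) = (j \<in> K)"
  proof
    fix j
    show "(inv \<tau> j \<in> K) = (j \<in> K)"
    proof
      assume "inv \<tau> j \<in> K"
      then have "\<tau> (inv \<tau> j) \<in> \<tau> ` K" by blast
      then show "j \<in> K" using a permutes_inverses[OF t] by simp
    next
      assume "j \<in> K"
      then obtain x where "x \<in> K" "j = \<tau> x" using a by blast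
      then show "inv \<tau> j \<in> K" using permutes_inverses[OF t] by simp
    qed
  qed
next
  assume a: "\<forall>j. (inv \<tau> j \<in> K) = (j \<in> K)"
  show "\<tau> ` K = K"
  proof
    show "\<tau> ` K \<subseteq> K" using a permutes_inverses[OF t] by (metis image_subsetI)
    show "K \<subseteq> \<tau> ` K" using a permutes_inverses[OF t] by (metis image_eqI subsetI)
  qed
qed

lemma act_Epat_iff:
  assumes t: "\<tau> permutes UNIV" and pq: "p \<noteq> q"
  shows "act (\<sigma>, \<tau>) (Epat K p q) = Epat K p q \<longleftrightarrow> \<tau> ` K = K"
proof -
  have "act (\<sigma>, \<tau>) (Epat K p q) = Epat K p q \<longleftrightarrow> (\<forall>j. (inv \<tau> j \<in> K) = (j \<in> K))"
    using pq by (auto simp: act_def vec_eq_iff Epat_def split: if_splits)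
  then show ?thesis using perm_image_iff[OF t] by simp
qed

lemma isotropy_Epat:
  assumes pq: "p \<noteq> q"
  shows "isotropy (Epat K p q :: ('m::finite, 'n::finite) arr) = full_axial_sub K"
proof (intro set_eqI)
  fix h :: "('m \<Rightarrow> 'm) \<times> ('n \<Rightarrow> 'n)"
  obtain \<sigma> \<tau> where h: "h = (\<sigma>, \<tau>)" by fastforce
  show "h \<in> isotropy (Epat K p q :: ('m, 'n) arr) \<longleftrightarrow> h \<in> full_axial_sub K"
    unfolding h isotropy_def full_axial_sub_def Gamma_def
    using act_Epat_iff[OF _ pq, of \<tau> \<sigma> K] by auto
qed

lemma Fix_axial_Epat: "(Epat K p q :: ('m::finite, 'n::finite) arr) \<in> Fix (axial_sub K)"
  unfolding Fix_def
proof (intro CollectI ballI)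
  fix h :: "('m \<Rightarrow> 'm) \<times> ('n \<Rightarrow> 'n)"
  assume "h \<in> axial_sub K"
  then obtain \<tau> where h: "h = (id, \<tau>)" and t: "\<tau> permutes UNIV" and K: "\<tau> ` K = K"
    unfolding axial_sub_def by blast
  show "act h (Epat K p q) = Epat K p q"
    unfolding h by (rule act_Epat[OF t]) (use perm_image_iff[OF t] K in blast)
qed

lemma Fix_rowperm_Epat: "(Epat K p q :: ('m::finite, 'n::finite) arr) \<in> Fix rowperm_sub"
  unfolding Fix_def rowperm_sub_def
  by (auto simp: act_def vec_eq_iff)

lemma consensus_Epat: "consensus (Epat K p q)"
  by (simp add: consensus_def Epat_def)

lemma sum_pattern:
  fixes K :: "'n::finite set"
  shows "(\<Sum>j\<in>UNIV. if j \<in> K then a else b) = real (card K) * a + real (CARD('n) - card K) * b"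
proof -
  have "(\<Sum>j\<in>UNIV. if j \<in> K then a else b) = (\<Sum>j\<in>K. a) + (\<Sum>j\<in>-K. b)"
    by (simp add: sum.If_cases Compl_eq_Diff_UNIV)
  also have "\<dots> = real (card K) * a + real (card (-K)) * b" by simp
  also have "card (-K) = CARD('n) - card K"
    by (simp add: Compl_eq_Diff_UNIV card_Diff_subset)
  finally show ?thesis .
qed

lemma Epat_decomp:
  fixes K :: "'n::finite set"
  shows "(Epat K p q :: ('m::finite, 'n) arr) \<in> {a + b | a b. a \<in> Vc \<and> b \<in> Vs}"
proof -
  define \<mu> where "\<mu> = (real (card K) * p + real (CARD('n) - card K) * q) / real CARD('n)"
  have "Epat K p q = Epat K (p - \<mu>) (q - \<mu>) + (Epat K \<mu> \<mu> :: ('m,'n) arr)"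
    by (simp add: vec_eq_iff)
  moreover have "(Epat K (p - \<mu>) (q - \<mu>) :: ('m,'n) arr) \<in> Vc"
  proof -
    have hs: "real (card K) + real (CARD('n) - card K) = real CARD('n)"
      using card_mono[of UNIV K] by simp
    have "real (card K) * (p - \<mu>) + real (CARD('n) - card K) * (q - \<mu>)
        = real (card K) * p + real (CARD('n) - card K) * q - (real (card K) + real (CARD('n) - card K)) * \<mu>"
      by (simp add: algebra_simps)
    also have "\<dots> = real (card K) * p + real (CARD('n) - card K) * q - real CARD('n) * \<mu>"
      by (simp only: hs)
    also have "\<dots> = 0"
    proof -
      have "real CARD('n) \<noteq> 0" by simp
      then show ?thesis by (simp add: \<mu>_def)
    qed
    finally have "(\<Sum>j\<in>UNIV. if j \<in> K then p - \<mu> else q - \<mu>) = 0"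
      using sum_pattern[of K "p - \<mu>" "q - \<mu>"] by simp
    then show ?thesis
      unfolding Vc_def by (simp add: Epat_def)
  qed
  moreover have "(Epat K \<mu> \<mu> :: ('m,'n) arr) \<in> Vs" by (simp add: Vs_def)
  ultimately show ?thesis by blast
qed




definition C1 :: "('a::euclidean_space \<Rightarrow> 'b::real_normed_vector) \<Rightarrow> bool" where
  "C1 f \<longleftrightarrow> (\<forall>p. f differentiable (at p)) \<and> (\<forall>u. continuous_on UNIV (\<lambda>p. frechet_derivative f (at p) u))"

lemma smooth_facts:
  assumes "smooth_map H"
  shows smooth_diff0: "H differentiable (at x)"
    and smooth_diff1: "(\<lambda>y. frechet_derivative H (at y) v) differentiable (at x)"
    and smooth_cont2: "continuous (at x) (\<lambda>y. frechet_derivative (\<lambda>y. frechet_derivative H (at y) v) (at y) w)"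
proof -
  show "H differentiable (at x)"
    using assms[unfolded smooth_map_def, rule_format, of "[]" x] by simp
  show "(\<lambda>y. frechet_derivative H (at y) v) differentiable (at x)"
    using assms[unfolded smooth_map_def, rule_format, of "[v]" x] by simp
  show "continuous (at x) (\<lambda>y. frechet_derivative (\<lambda>y. frechet_derivative H (at y) v) (at y) w)"
    using assms[unfolded smooth_map_def, rule_format, of "[w, v]" x]
    by (simp add: differentiable_imp_continuous_within)
qed

lemma deriv_comp_lin:
  fixes H :: "'x::real_normed_vector \<Rightarrow> 'y::real_normed_vector"
    and L :: "'a::real_normed_vector \<Rightarrow> 'x" and \<pi> :: "'y \<Rightarrow> 'z::real_normed_vector"
  assumes d: "\<And>y. H differentiable (at y)" and L: "bounded_linear L" and \<pi>: "bounded_linear \<pi>"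
  shows "((\<lambda>p. \<pi> (H (L p))) has_derivative (\<lambda>u. \<pi> (frechet_derivative H (at (L p)) (L u)))) (at p)"
proof -
  have "(H has_derivative frechet_derivative H (at (L p))) (at (L p))"
    using d frechet_derivative_works by blast
  from has_derivative_compose[OF bounded_linear_imp_has_derivative[OF L] this]
  have "((\<lambda>p. H (L p)) has_derivative (\<lambda>u. frechet_derivative H (at (L p)) (L u))) (at p)" .
  then show ?thesis by (rule bounded_linear.has_derivative[OF \<pi>])
qed

lemma frechet_comp_lin:
  fixes H :: "'x::real_normed_vector \<Rightarrow> 'y::real_normed_vector"
    and L :: "'a::real_normed_vector \<Rightarrow> 'x" and \<pi> :: "'y \<Rightarrow> 'z::real_normed_vector"
  assumes d: "\<And>y. H differentiable (at y)" and L: "bounded_linear L" and \<pi>: "bounded_linear \<pi>"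
  shows "frechet_derivative (\<lambda>p. \<pi> (H (L p))) (at p) = (\<lambda>u. \<pi> (frechet_derivative H (at (L p)) (L u)))"
  using frechet_derivative_at[OF deriv_comp_lin[OF d L \<pi>]] by simp

lemma comp_lin_C1:
  fixes H :: "'x::real_normed_vector \<Rightarrow> 'y::real_normed_vector"
    and L :: "'a::euclidean_space \<Rightarrow> 'x" and \<pi> :: "'y \<Rightarrow> real"
  assumes sm: "smooth_map H" and L: "bounded_linear L" and \<pi>: "bounded_linear \<pi>"
  shows "C1 (\<lambda>p. \<pi> (H (L p)))"
    and "C1 (\<lambda>p. frechet_derivative (\<lambda>p. \<pi> (H (L p))) (at p) u)"
proof -
  have d0: "\<And>y. H differentiable (at y)" using smooth_diff0[OF sm] .
  have fr: "frechet_derivative (\<lambda>p. \<pi> (H (L p))) (at p) = (\<lambda>u. \<pi> (frechet_derivative H (at (L p)) (L u)))" for p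
    by (rule frechet_comp_lin[OF d0 L \<pi>])
  have contL: "continuous_on UNIV L" using L linear_continuous_on by blast
  have cont1: "continuous_on UNIV (\<lambda>p. \<pi> (frechet_derivative H (at (L p)) (L u)))" for u
  proof -
    have "continuous_on UNIV (\<lambda>y. frechet_derivative H (at y) (L u))"
      by (intro continuous_at_imp_continuous_on ballI differentiable_imp_continuous_within smooth_diff1[OF sm])
    then have "continuous_on UNIV (\<lambda>p. frechet_derivative H (at (L p)) (L u))"
      using continuous_on_compose2[OF _ contL] by blast
    then show ?thesis using bounded_linear.continuous_on[OF \<pi>] by blast
  qed
  show "C1 (\<lambda>p. \<pi> (H (L p)))"
    unfolding C1_def
  proof
    show "\<forall>p. (\<lambda>p. \<pi> (H (L p))) differentiable at p"
      using deriv_comp_lin[OF d0 L \<pi>] differentiable_def by blast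
    show "\<forall>u. continuous_on UNIV (\<lambda>p. frechet_derivative (\<lambda>p. \<pi> (H (L p))) (at p) u)"
      using cont1 by (simp add: fr)
  qed
  let ?D = "\<lambda>y. frechet_derivative H (at y) (L u)"
  have d1: "\<And>y. ?D differentiable (at y)" using smooth_diff1[OF sm] .
  have fr2: "frechet_derivative (\<lambda>p. \<pi> (?D (L p))) (at p) = (\<lambda>w. \<pi> (frechet_derivative ?D (at (L p)) (L w)))" for p
    by (rule frechet_comp_lin[OF d1 L \<pi>])
  have eq: "(\<lambda>p. frechet_derivative (\<lambda>p. \<pi> (H (L p))) (at p) u) = (\<lambda>p. \<pi> (?D (L p)))"
    by (simp add: fr)
  show "C1 (\<lambda>p. frechet_derivative (\<lambda>p. \<pi> (H (L p))) (at p) u)"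
    unfolding eq C1_def
  proof
    show "\<forall>p. (\<lambda>p. \<pi> (?D (L p))) differentiable at p"
      using deriv_comp_lin[OF d1 L \<pi>] differentiable_def by blast
    show "\<forall>w. continuous_on UNIV (\<lambda>p. frechet_derivative (\<lambda>p. \<pi> (?D (L p))) (at p) w)"
    proof
      fix w
      have "continuous_on UNIV (\<lambda>y. frechet_derivative ?D (at y) (L w))"
        by (intro continuous_at_imp_continuous_on ballI smooth_cont2[OF sm])
      then have "continuous_on UNIV (\<lambda>p. frechet_derivative ?D (at (L p)) (L w))"
        using continuous_on_compose2[OF _ contL] by blast
      then show "continuous_on UNIV (\<lambda>p. frechet_derivative (\<lambda>p. \<pi> (?D (L p))) (at p) w)"
        unfolding fr2 using bounded_linear.continuous_on[OF \<pi>] by blast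
    qed
  qed
qed



lemma C1_diff: "C1 f \<Longrightarrow> (f has_derivative frechet_derivative f (at p)) (at p)"
  unfolding C1_def using frechet_derivative_works by blast

lemma C1_bl: "C1 f \<Longrightarrow> bounded_linear (frechet_derivative f (at p))"
  using C1_diff has_derivative_bounded_linear by blast

lemma C1_cont: "C1 f \<Longrightarrow> continuous_on UNIV f"
  unfolding C1_def
  by (intro continuous_at_imp_continuous_on ballI differentiable_imp_continuous_within) auto

lemma C1_dcont: "C1 f \<Longrightarrow> continuous_on UNIV (\<lambda>p. frechet_derivative f (at p) u)"
  unfolding C1_def by blast

lemma C1_blinfun:
  fixes f :: "'a::euclidean_space \<Rightarrow> 'b::real_normed_vector"
  assumes "C1 f"
  shows "(f has_derivative blinfun_apply (Blinfun (frechet_derivative f (at p)))) (at p)"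
    and "continuous_on UNIV (\<lambda>p. Blinfun (frechet_derivative f (at p)))"
proof -
  show "(f has_derivative blinfun_apply (Blinfun (frechet_derivative f (at p)))) (at p)"
    using C1_diff[OF assms] C1_bl[OF assms] by (simp add: bounded_linear_Blinfun_apply)
  show "continuous_on UNIV (\<lambda>p. Blinfun (frechet_derivative f (at p)))"
    by (rule continuous_on_blinfun_componentwise)
       (simp add: bounded_linear_Blinfun_apply[OF C1_bl[OF assms]] C1_dcont[OF assms])
qed

lemma ift:
  fixes f :: "'a::euclidean_space \<Rightarrow> 'a"
  assumes f: "C1 f" and J: "bounded_linear J" and Jinv: "\<And>u. J (frechet_derivative f (at x0) u) = u"
  obtains V g where "open V" "f x0 \<in> V" "\<And>y. y \<in> V \<Longrightarrow> f (g y) = y" "g (f x0) = x0"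
    "continuous_on V g" "\<And>y. y \<in> V \<Longrightarrow> g differentiable (at y)"
proof -
  have inv: "Blinfun J o\<^sub>L Blinfun (frechet_derivative f (at x0)) = id_blinfun"
    by (rule blinfun_eqI)
       (simp add: bounded_linear_Blinfun_apply[OF J] bounded_linear_Blinfun_apply[OF C1_bl[OF f]] Jinv)
  obtain U' V g g' where "open U'" "U' \<subseteq> UNIV" "x0 \<in> U'" "open V" "f x0 \<in> V" "homeomorphism U' V f g"
    "\<And>y. y \<in> V \<Longrightarrow> (g has_derivative (g' y)) (at y)"
    using inverse_function_theorem[OF open_UNIV C1_blinfun(1)[OF f] C1_blinfun(2)[OF f] UNIV_I inv]
    by metis
  then show ?thesis
    using that unfolding homeomorphism_def differentiable_def by metis
qed

definition psi :: "real \<Rightarrow> real \<times> real \<times> real \<Rightarrow> real \<times> real \<times> real" where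
  "psi \<tau> p = (fst p, \<tau> * fst (snd p), snd (snd p))"

lemma psi_bl: "bounded_linear (psi \<tau>)"
  unfolding psi_def
  by (auto intro!: bounded_linear_intros)

definition hc :: "(real \<times> real \<times> real \<Rightarrow> real) \<Rightarrow> real \<times> real \<times> real \<Rightarrow> real" where
  "hc b p = integral {0..1} (\<lambda>\<tau>. b (psi \<tau> p))"

lemma lin3:
  fixes g :: "real \<times> real \<times> real \<Rightarrow> real"
  assumes "linear g"
  shows "g u = fst u * g (1,0,0) + fst (snd u) * g (0,1,0) + snd (snd u) * g (0,0,1)"
proof -
  obtain a b c where u: "u = (a, b, c)" by (cases u) auto
  interpret L: linear g by (rule assms)
  have "u = a *\<^sub>R (1,0,0) + b *\<^sub>R (0,1,0) + c *\<^sub>R (0,0,1)" by (simp add: u)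
  then have "g u = g (a *\<^sub>R (1,0,0) + b *\<^sub>R (0,1,0) + c *\<^sub>R (0,0,1))" by simp
  also have "\<dots> = a * g (1,0,0) + b * g (0,1,0) + c * g (0,0,1)"
    by (simp only: L.add L.scale) simp
  finally show ?thesis by (simp add: u)
qed

lemma hc_zero: "hc b (s, 0, l) = b (s, 0, l)"
  by (simp add: hc_def psi_def)

lemma hadamard:
  fixes B :: "real \<times> real \<times> real \<Rightarrow> real"
  assumes d: "\<And>p. B differentiable (at p)"
  shows "B (s, x, l) - B (s, 0, l) = x * hc (\<lambda>p. frechet_derivative B (at p) (0,1,0)) (s, x, l)"
proof -
  let ?b = "\<lambda>p. frechet_derivative B (at p) (0,1,0)"
  have der: "((\<lambda>\<tau>. B (s, \<tau> * x, l)) has_vector_derivative x * ?b (s, \<tau> * x, l)) (at \<tau> within {0..1})" for \<tau>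
  proof -
    have lin: "((\<lambda>\<tau>. (s, \<tau> * x, l)) has_derivative (\<lambda>h. (0, h * x, 0))) (at \<tau> within {0..1})"
      by (auto intro!: derivative_eq_intros)
    have "(B has_derivative frechet_derivative B (at (s, \<tau> * x, l))) (at (s, \<tau> * x, l))"
      using d frechet_derivative_works by blast
    from has_derivative_compose[OF lin this]
    have "((\<lambda>\<tau>. B (s, \<tau> * x, l)) has_derivative (\<lambda>h. frechet_derivative B (at (s, \<tau> * x, l)) (0, h * x, 0))) (at \<tau> within {0..1})" .
    moreover have "frechet_derivative B (at (s, \<tau> * x, l)) (0, h * x, 0) = h * (x * ?b (s, \<tau> * x, l))" for h
    proof -
      have "linear (frechet_derivative B (at (s, \<tau> * x, l)))"
        using d linear_frechet_derivative by blast
      then interpret L: linear "frechet_derivative B (at (s, \<tau> * x, l))" .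
      have "frechet_derivative B (at (s, \<tau> * x, l)) ((h * x) *\<^sub>R (0, 1, 0)) = (h * x) * ?b (s, \<tau> * x, l)"
        by (simp only: L.scale) simp
      then show ?thesis by simp
    qed
    ultimately show ?thesis
      unfolding has_vector_derivative_def by (simp add: mult.commute)
  qed
  have "((\<lambda>\<tau>. x * ?b (s, \<tau> * x, l)) has_integral B (s, 1 * x, l) - B (s, 0 * x, l)) {0..1}"
    by (rule fundamental_theorem_of_calculus) (use der in auto)
  then have "((\<lambda>\<tau>. x * ?b (s, \<tau> * x, l)) has_integral B (s, x, l) - B (s, 0, l)) {0..1}"
    by simp
  then have "integral {0..1} (\<lambda>\<tau>. x * ?b (s, \<tau> * x, l)) = B (s, x, l) - B (s, 0, l)"
    by (rule integral_unique)
  then show ?thesis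
    by (simp add: hc_def psi_def integral_mult_right)
qed

lemma hc_C1:
  fixes b :: "real \<times> real \<times> real \<Rightarrow> real"
  assumes b: "C1 b"
  shows "C1 (hc b)"
proof -
  let ?Db = "\<lambda>q. frechet_derivative b (at q)"
  define fx where "fx p \<tau> = Blinfun (\<lambda>u. ?Db (psi \<tau> p) (psi \<tau> u))" for p \<tau>
  have blfx: "bounded_linear (\<lambda>u. ?Db (psi \<tau> p) (psi \<tau> u))" for p \<tau>
    using bounded_linear_compose[OF C1_bl[OF b] psi_bl] by simp
  have fx_apply: "blinfun_apply (fx p \<tau>) u = ?Db (psi \<tau> p) (psi \<tau> u)" for p \<tau> u
    unfolding fx_def using bounded_linear_Blinfun_apply[OF blfx] by simp
  have hd: "((\<lambda>p. b (psi \<tau> p)) has_derivative blinfun_apply (fx p \<tau>)) (at p within UNIV)" for p \<tau>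
  proof -
    from has_derivative_compose[OF bounded_linear_imp_has_derivative[OF psi_bl] C1_diff[OF b]]
    show ?thesis unfolding fx_def bounded_linear_Blinfun_apply[OF blfx] by simp
  qed
  have cb: "continuous_on UNIV b" using C1_cont[OF b] .
  have cpsi: "continuous_on X (\<lambda>(p, \<tau>). psi \<tau> p)" for X
    unfolding psi_def split_beta by (intro continuous_intros)
  have cD: "continuous_on X (\<lambda>z. ?Db (psi (snd z) (fst z)) e)" for X e
  proof -
    have "continuous_on UNIV (\<lambda>q. ?Db q e)" using C1_dcont[OF b] .
    then have "continuous_on X ((\<lambda>q. ?Db q e) \<circ> (\<lambda>(p, \<tau>). psi \<tau> p))"
      by (intro continuous_on_compose cpsi) (auto intro: continuous_on_subset)
    then show ?thesis by (simp add: o_def split_beta)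
  qed
  have lin: "linear (?Db q)" for q using C1_bl[OF b] bounded_linear.linear by blast
  have cont_fx: "continuous_on (UNIV \<times> cbox 0 1) (\<lambda>(p, \<tau>). fx p \<tau>)"
  proof (rule continuous_on_blinfun_componentwise)
    fix i :: "real \<times> real \<times> real"
    have eq: "blinfun_apply (fx p \<tau>) i = fst i * ?Db (psi \<tau> p) (1,0,0) + (\<tau> * fst (snd i)) * ?Db (psi \<tau> p) (0,1,0) + snd (snd i) * ?Db (psi \<tau> p) (0,0,1)" for p \<tau>
    proof -
      have "blinfun_apply (fx p \<tau>) i = ?Db (psi \<tau> p) (psi \<tau> i)" by (rule fx_apply)
      also have "\<dots> = fst (psi \<tau> i) * ?Db (psi \<tau> p) (1,0,0) + fst (snd (psi \<tau> i)) * ?Db (psi \<tau> p) (0,1,0) + snd (snd (psi \<tau> i)) * ?Db (psi \<tau> p) (0,0,1)"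
        by (rule lin3[OF lin])
      also have "\<dots> = fst i * ?Db (psi \<tau> p) (1,0,0) + (\<tau> * fst (snd i)) * ?Db (psi \<tau> p) (0,1,0) + snd (snd i) * ?Db (psi \<tau> p) (0,0,1)"
        by (simp add: psi_def)
      finally show ?thesis .
    qed
    show "continuous_on (UNIV \<times> cbox 0 1) (\<lambda>x. blinfun_apply ((\<lambda>(p, \<tau>). fx p \<tau>) x) i)"
      unfolding split_beta eq
      by (intro continuous_intros cD)
  qed
  have integ: "(\<lambda>\<tau>. b (psi \<tau> p)) integrable_on cbox 0 1" for p
  proof -
    have "continuous_on (cbox 0 1) (\<lambda>\<tau>. psi \<tau> p)"
      unfolding psi_def by (intro continuous_intros)
    then have "continuous_on (cbox 0 1) (\<lambda>\<tau>. b (psi \<tau> p))"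
      using continuous_on_compose2[OF cb] by blast
    then show ?thesis by (rule integrable_continuous)
  qed
  have hcd: "(hc b has_derivative blinfun_apply (integral (cbox 0 1) (fx p))) (at p)" for p
  proof -
    have "((\<lambda>p. integral (cbox 0 1) (\<lambda>\<tau>. b (psi \<tau> p))) has_derivative blinfun_apply (integral (cbox 0 1) (fx p))) (at p within UNIV)"
      by (rule leibniz_rule[OF hd integ cont_fx]) auto
    then show ?thesis unfolding hc_def by simp
  qed
  have cint: "continuous_on UNIV (\<lambda>p. integral (cbox 0 1) (fx p))"
    by (rule integral_continuous_on_param[OF cont_fx])
  show ?thesis
    unfolding C1_def
  proof
    show "\<forall>p. hc b differentiable at p" using hcd differentiable_def by blast
    show "\<forall>u. continuous_on UNIV (\<lambda>p. frechet_derivative (hc b) (at p) u)"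
    proof
      fix u
      have "frechet_derivative (hc b) (at p) = blinfun_apply (integral (cbox 0 1) (fx p))" for p
        using frechet_derivative_at[OF hcd] by simp
      then show "continuous_on UNIV (\<lambda>p. frechet_derivative (hc b) (at p) u)"
        using cint by (auto intro!: continuous_intros)
    qed
  qed
qed



lemma C1_lin:
  fixes L :: "'a::euclidean_space \<Rightarrow> 'b::real_normed_vector"
  assumes L: "bounded_linear L"
  shows "C1 L" and "frechet_derivative L (at p) = L"
proof -
  have d: "(L has_derivative L) (at p)" for p using bounded_linear_imp_has_derivative[OF L] .
  have fr: "frechet_derivative L (at p) = L" for p using frechet_derivative_at[OF d] by simp
  show "frechet_derivative L (at p) = L" by (rule fr)
  show "C1 L" unfolding C1_def fr using d differentiable_def by auto
qed

lemma C1_pair: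
  fixes f :: "'a::euclidean_space \<Rightarrow> 'b::real_normed_vector" and g :: "'a \<Rightarrow> 'c::real_normed_vector"
  assumes f: "C1 f" and g: "C1 g"
  shows "C1 (\<lambda>p. (f p, g p))"
    and "frechet_derivative (\<lambda>p. (f p, g p)) (at p) = (\<lambda>u. (frechet_derivative f (at p) u, frechet_derivative g (at p) u))"
proof -
  have d: "((\<lambda>p. (f p, g p)) has_derivative (\<lambda>u. (frechet_derivative f (at p) u, frechet_derivative g (at p) u))) (at p)" for p
    by (rule has_derivative_Pair[OF C1_diff[OF f] C1_diff[OF g]])
  have fr: "frechet_derivative (\<lambda>p. (f p, g p)) (at p) = (\<lambda>u. (frechet_derivative f (at p) u, frechet_derivative g (at p) u))" for p
    using frechet_derivative_at[OF d] by simp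
  show "frechet_derivative (\<lambda>p. (f p, g p)) (at p) = (\<lambda>u. (frechet_derivative f (at p) u, frechet_derivative g (at p) u))"
    by (rule fr)
  show "C1 (\<lambda>p. (f p, g p))"
    unfolding C1_def fr
  proof
    show "\<forall>p. (\<lambda>p. (f p, g p)) differentiable at p" using d differentiable_def by blast
    show "\<forall>u. continuous_on UNIV (\<lambda>p. (frechet_derivative f (at p) u, frechet_derivative g (at p) u))"
      using C1_dcont[OF f] C1_dcont[OF g] by (auto intro!: continuous_on_Pair)
  qed
qed

lemma pattern_deriv:
  fixes F :: "'x::real_normed_vector \<Rightarrow> ('m::finite, 'n::finite) arr"
  assumes dF: "F differentiable (at a)"
    and pat: "\<And>t. F (a + t *\<^sub>R d) $ i $ j = F (a + t *\<^sub>R d) $ i' $ j'"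
  shows "frechet_derivative F (at a) d $ i $ j = frechet_derivative F (at a) d $ i' $ j'"
proof -
  have line: "((\<lambda>t::real. a + t *\<^sub>R d) has_derivative (\<lambda>h. h *\<^sub>R d)) (at 0)"
    by (auto intro!: derivative_eq_intros)
  have "(F has_derivative frechet_derivative F (at a)) (at (a + 0 *\<^sub>R d))"
    using dF frechet_derivative_works[of F "at a"] by simp
  from has_derivative_compose[OF line this]
  have c: "((\<lambda>t. F (a + t *\<^sub>R d)) has_derivative (\<lambda>h. frechet_derivative F (at a) (h *\<^sub>R d))) (at 0)" .
  have bl: "bounded_linear (\<lambda>w::('m, 'n) arr. w $ i1 $ j1)" for i1 j1
    by (intro bounded_linear_compose[OF bounded_linear_vec_nth bounded_linear_vec_nth])
  have c1: "((\<lambda>t. F (a + t *\<^sub>R d) $ i $ j) has_derivative (\<lambda>h. frechet_derivative F (at a) (h *\<^sub>R d) $ i $ j)) (at 0)"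
    using bounded_linear.has_derivative[OF bl c] .
  have c2: "((\<lambda>t. F (a + t *\<^sub>R d) $ i $ j) has_derivative (\<lambda>h. frechet_derivative F (at a) (h *\<^sub>R d) $ i' $ j')) (at 0)"
    using bounded_linear.has_derivative[OF bl c] pat by simp
  have "(\<lambda>h. frechet_derivative F (at a) (h *\<^sub>R d) $ i $ j) = (\<lambda>h. frechet_derivative F (at a) (h *\<^sub>R d) $ i' $ j')"
    using has_derivative_unique[OF c1 c2] .
  then have "frechet_derivative F (at a) (1 *\<^sub>R d) $ i $ j = frechet_derivative F (at a) (1 *\<^sub>R d) $ i' $ j'"
    by metis
  then show ?thesis by simp
qed

lemma partial_deriv:
  fixes G :: "'x::real_normed_vector \<Rightarrow> real \<Rightarrow> 'y::real_normed_vector"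
  assumes d: "(\<lambda>p. G (fst p) (snd p)) differentiable (at (z, l))"
  shows "frechet_derivative (\<lambda>z. G z l) (at z) v = frechet_derivative (\<lambda>p. G (fst p) (snd p)) (at (z, l)) (v, 0)"
proof -
  have line: "((\<lambda>z. (z, l)) has_derivative (\<lambda>v. (v, 0))) (at z)"
    by (auto intro!: derivative_eq_intros)
  have "((\<lambda>p. G (fst p) (snd p)) has_derivative frechet_derivative (\<lambda>p. G (fst p) (snd p)) (at (z, l))) (at (z, l))"
    using d frechet_derivative_works by blast
  from has_derivative_compose[OF line this]
  have "((\<lambda>z. G z l) has_derivative (\<lambda>v. frechet_derivative (\<lambda>p. G (fst p) (snd p)) (at (z, l)) (v, 0))) (at z)"
    by simp
  from frechet_derivative_at[OF this] show ?thesis by metis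
qed



lemma C1_comp_lin:
  fixes f :: "'a::euclidean_space \<Rightarrow> 'b::real_normed_vector" and L :: "'c::euclidean_space \<Rightarrow> 'a"
  assumes f: "C1 f" and L: "bounded_linear L"
  shows "C1 (\<lambda>q. f (L q))"
    and "frechet_derivative (\<lambda>q. f (L q)) (at q) = (\<lambda>u. frechet_derivative f (at (L q)) (L u))"
proof -
  have d: "((\<lambda>q. f (L q)) has_derivative (\<lambda>u. frechet_derivative f (at (L q)) (L u))) (at q)" for q
    by (rule has_derivative_compose[OF bounded_linear_imp_has_derivative[OF L] C1_diff[OF f]])
  have fr: "frechet_derivative (\<lambda>q. f (L q)) (at q) = (\<lambda>u. frechet_derivative f (at (L q)) (L u))" for q
    using frechet_derivative_at[OF d] by simp
  show "frechet_derivative (\<lambda>q. f (L q)) (at q) = (\<lambda>u. frechet_derivative f (at (L q)) (L u))" by (rule fr)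
  have contL: "continuous_on UNIV L" using L linear_continuous_on by blast
  show "C1 (\<lambda>q. f (L q))"
    unfolding C1_def fr
  proof
    show "\<forall>q. (\<lambda>q. f (L q)) differentiable at q" using d differentiable_def by blast
    show "\<forall>u. continuous_on UNIV (\<lambda>q. frechet_derivative f (at (L q)) (L u))"
      using continuous_on_compose2[OF C1_dcont[OF f] contL] by blast
  qed
qed

lemma hd_real:
  fixes f :: "real \<Rightarrow> real"
  assumes "(f has_derivative f') F"
  shows "(f has_field_derivative f' 1) F"
proof -
  interpret L: linear f' using has_derivative_linear[OF assms] .
  have "f' = (\<lambda>h. f' 1 * h)"
  proof
    fix h :: real
    have "f' h = f' (h *\<^sub>R 1)" by simp
    also have "\<dots> = h *\<^sub>R f' 1" by (rule L.scale)
    finally show "f' h = f' 1 * h" by simp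
  qed
  then show ?thesis using assms unfolding has_field_derivative_def by metis
qed

lemma curve_comp:
  fixes F :: "real \<times> real \<times> real \<Rightarrow> real" and a b c :: "real \<Rightarrow> real"
  assumes F: "C1 F" and a: "(a has_real_derivative a') (at t)" and b: "(b has_real_derivative b') (at t)"
    and c: "(c has_real_derivative c') (at t)"
  shows "((\<lambda>t. F (a t, b t, c t)) has_real_derivative frechet_derivative F (at (a t, b t, c t)) (a', b', c')) (at t)"
proof -
  have "((\<lambda>t. (a t, b t, c t)) has_derivative (\<lambda>h. (a' * h, b' * h, c' * h))) (at t)"
    using a b c unfolding has_field_derivative_def by (intro has_derivative_Pair)
  from has_derivative_compose[OF this C1_diff[OF F]]
  have "((\<lambda>t. F (a t, b t, c t)) has_derivative (\<lambda>h. frechet_derivative F (at (a t, b t, c t)) (a' * h, b' * h, c' * h))) (at t)" .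
  from hd_real[OF this] show ?thesis by simp
qed

lemma deriv_zero_open:
  fixes f :: "real \<Rightarrow> real"
  assumes "(f has_real_derivative D) (at x)" "open W" "x \<in> W" "\<And>y. y \<in> W \<Longrightarrow> f y = 0"
  shows "D = 0"
proof -
  have "((\<lambda>y. 0) has_real_derivative D) (at x)"
    by (rule has_field_derivative_transform_within_open[OF assms(1-3)]) (simp add: assms(4))
  moreover have "((\<lambda>y. 0) has_real_derivative 0) (at x)" by simp
  ultimately show ?thesis using DERIV_unique by blast
qed

lemma main_branch:
  fixes G :: "('m::finite, 'n::finite) arr \<Rightarrow> real \<Rightarrow> ('m, 'n) arr"
    and z0 :: "('m, 'n) arr" and lam0 :: real and K :: "'n set"
  assumes smooth: "smooth_map (\<lambda>p. G (fst p) (snd p))"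
    and adm: "\<forall>l. admissible (\<lambda>z. G z l)"
    and sync: "z0 \<in> Vs" and eq: "G z0 lam0 = 0"
    and ker: "{w. frechet_derivative (\<lambda>z. G z lam0) (at z0) w = 0} = Vc"
    and generic:
      "\<forall>zs v. zs lam0 = z0 \<and> continuous (at lam0) zs \<and> (\<forall>l. zs l \<in> Vs)
            \<and> (\<forall>\<^sub>F l in at lam0. G (zs l) l = 0) \<and> v \<in> Vc \<and> v \<noteq> 0
         \<longrightarrow> (\<exists>d. d \<noteq> 0 \<and>
               ((\<lambda>l. inner (frechet_derivative (\<lambda>z. G z l) (at (zs l)) v) v)
                  has_real_derivative d) (at lam0))"
    and j1: "j1 \<in> K" and j2: "j2 \<notin> K"
  shows "\<exists>\<epsilon> z lam zs v. \<epsilon> > 0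
      \<and> continuous_on {-\<epsilon><..<\<epsilon>} z \<and> continuous_on {-\<epsilon><..<\<epsilon>} lam
      \<and> z 0 = z0 \<and> lam 0 = lam0
      \<and> (\<forall>t\<in>{-\<epsilon><..<\<epsilon>}. G (z t) (lam t) = 0)
      \<and> (\<forall>t\<in>{-\<epsilon><..<\<epsilon>}. t \<noteq> 0 \<longrightarrow>
            isotropy (z t) = full_axial_sub K
          \<and> z t \<in> Fix (axial_sub K)
          \<and> z t \<in> Fix rowperm_sub
          \<and> z t \<in> {a + b | a b. a \<in> Vc \<and> b \<in> Vs}
          \<and> consensus (z t))
      \<and> zs lam0 = z0 \<and> continuous (at lam0) zs \<and> (\<forall>l. zs l \<in> Vs)
      \<and> (\<forall>\<^sub>F l in at lam0. G (zs l) l = 0)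
      \<and> v \<in> Vc \<and> v \<noteq> 0
      \<and> ((\<lambda>t. (z t - zs (lam t) - t *\<^sub>R v) /\<^sub>R t) \<longlongrightarrow> 0) (at 0)"
proof -
  obtain i0 :: 'm where True by simp
  define nn where "nn = real CARD('n)"
  define kk where "kk = real (card K)"
  define mm where "mm = real CARD('m)"
  have kpos: "kk > 0" using j1 by (auto simp: kk_def card_gt_0_iff)
  have kless: "kk < nn"
  proof -
    have "card K < CARD('n)" using j2 by (intro psubset_card_mono) auto
    then show ?thesis by (simp add: kk_def nn_def)
  qed
  have mpos: "mm > 0" by (simp add: mm_def)
  define E10 :: "('m, 'n) arr" where "E10 = Epat K 1 0"
  define E01 :: "('m, 'n) arr" where "E01 = Epat K 0 1"
  define e where "e p = ((fst p + (nn - kk) * fst (snd p)) *\<^sub>R E10 + (fst p - kk * fst (snd p)) *\<^sub>R E01, snd (snd p))"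
    for p :: "real \<times> real \<times> real"
  have e_eq: "e (s, x, l) = (Epat K (s + (nn - kk) * x) (s - kk * x), l)" for s x l
    by (simp add: e_def E10_def E01_def vec_eq_iff)
  have bl_e: "bounded_linear e"
    unfolding e_def[abs_def] by (auto intro!: bounded_linear_intros)
  define H where "H = (\<lambda>p. G (fst p) (snd p))"
  have smH: "smooth_map H" using smooth by (simp add: H_def)
  have dH: "H differentiable (at y)" for y using smooth_diff0[OF smH] .
  define \<pi>1 where "\<pi>1 = (\<lambda>w::('m, 'n) arr. w $ i0 $ j1)"
  define \<pi>2 where "\<pi>2 = (\<lambda>w::('m, 'n) arr. w $ i0 $ j2)"
  define \<pi>12 where "\<pi>12 = (\<lambda>w::('m, 'n) arr. w $ i0 $ j1 - w $ i0 $ j2)"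
  have bl_nth: "bounded_linear (\<lambda>w::('m, 'n) arr. w $ i1 $ j)" for i1 j
    by (intro bounded_linear_compose[OF bounded_linear_vec_nth bounded_linear_vec_nth])
  have bl1: "bounded_linear \<pi>1" unfolding \<pi>1_def by (rule bl_nth)
  have bl2: "bounded_linear \<pi>2" unfolding \<pi>2_def by (rule bl_nth)
  have bl12: "bounded_linear \<pi>12" unfolding \<pi>12_def by (intro bounded_linear_sub bl_nth)
  define A where "A = (\<lambda>p. \<pi>2 (H (e p)))"
  define B where "B = (\<lambda>p. \<pi>12 (H (e p)))"
  define Bx where "Bx = (\<lambda>p. frechet_derivative B (at p) (0, 1, 0))"
  define C where "C = hc Bx"
  have C1A: "C1 A" unfolding A_def by (rule comp_lin_C1(1)[OF smH bl_e bl2])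
  have C1B: "C1 B" unfolding B_def by (rule comp_lin_C1(1)[OF smH bl_e bl12])
  have C1Bx: "C1 Bx" unfolding Bx_def B_def by (rule comp_lin_C1(2)[OF smH bl_e bl12])
  have C1C: "C1 C" unfolding C_def by (rule hc_C1[OF C1Bx])
  have DA: "frechet_derivative A (at p) u = \<pi>2 (frechet_derivative H (at (e p)) (e u))" for p u
    unfolding A_def using frechet_comp_lin[OF dH bl_e bl2] by simp
  have DB: "frechet_derivative B (at p) u = \<pi>12 (frechet_derivative H (at (e p)) (e u))" for p u
    unfolding B_def using frechet_comp_lin[OF dH bl_e bl12] by simp
  have He: "H (e (s, x, l)) = G (Epat K (s + (nn - kk) * x) (s - kk * x)) l" for s x l
    by (simp add: H_def e_eq)
  have Gpat: "G (Epat K p q) l = Epat K (G (Epat K p q) l $ i0 $ j1) (G (Epat K p q) l $ i0 $ j2)" for p q l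
    using adm_Epat[of "\<lambda>z. G z l", OF _ j1 j2] adm by blast
  have equil: "G (Epat K (s + (nn - kk) * x) (s - kk * x)) l = 0" if "A (s, x, l) = 0" "B (s, x, l) = 0" for s x l
  proof -
    have "G (Epat K (s + (nn - kk) * x) (s - kk * x)) l $ i0 $ j2 = 0"
      "G (Epat K (s + (nn - kk) * x) (s - kk * x)) l $ i0 $ j1 = 0"
      using that by (simp_all add: A_def B_def \<pi>2_def \<pi>12_def He)
    then have "G (Epat K (s + (nn - kk) * x) (s - kk * x)) l = Epat K 0 0"
      using Gpat[of "s + (nn - kk) * x" "s - kk * x" l] by simp
    then show ?thesis by (simp add: vec_eq_iff)
  qed
  define s0 where "s0 = z0 $ i0 $ j1"
  have z0E: "z0 = Epat K s0 s0"
    using sync by (simp add: Vs_def s0_def vec_eq_iff)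
  define p0 where "p0 = (s0, 0::real, lam0)"
  have ep0: "e p0 = (z0, lam0)" by (simp add: p0_def e_eq z0E)
  have Bzero: "B (s, 0, l) = 0" for s l
    using adm_sync[of "\<lambda>z. G z l" K s i0 j1 i0 j2] adm by (simp add: B_def \<pi>12_def He)
  have dB: "B differentiable (at p)" for p using C1B unfolding C1_def by blast
  have hadB: "B (s, x, l) = x * C (s, x, l)" for s x l
    using hadamard[OF dB, of s x l] Bzero by (simp add: C_def Bx_def)
  have Ap0: "A p0 = 0" by (simp add: A_def ep0 \<pi>2_def eq H_def)
  have DHz: "frechet_derivative H (at (z, l)) (w, 0) = frechet_derivative (\<lambda>z. G z l) (at z) w" for z l w
  proof -
    have d: "(\<lambda>p. G (fst p) (snd p)) differentiable (at (z, l))" using dH[of "(z, l)"] by (simp only: H_def)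
    show ?thesis unfolding H_def by (rule partial_deriv[OF d, symmetric])
  qed
  have kerI: "frechet_derivative H (at (z0, lam0)) (w, 0) = 0 \<longleftrightarrow> w \<in> Vc" for w
  proof -
    have "w \<in> {w. frechet_derivative (\<lambda>z. G z lam0) (at z0) w = 0} \<longleftrightarrow> w \<in> Vc" by (simp only: ker)
    then show ?thesis using DHz[of z0 lam0 w] by simp
  qed
  define v :: "('m, 'n) arr" where "v = Epat K (nn - kk) (- kk)"
  have vVc: "v \<in> Vc"
  proof -
    have "(\<Sum>j\<in>UNIV. if j \<in> K then nn - kk else - kk) = kk * (nn - kk) + (nn - kk) * (- kk)"
      using sum_pattern[of K "nn - kk" "- kk"] card_mono[of UNIV K] by (simp add: kk_def nn_def of_nat_diff)
    then show ?thesis unfolding Vc_def v_def by (simp add: Epat_def algebra_simps)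
  qed
  have vnz: "v \<noteq> 0"
  proof
    assume "v = 0"
    then have "v $ i0 $ j1 = 0" by simp
    then show False using kless by (simp add: v_def j1)
  qed
  have e010: "e (0, 1, 0) = (v, 0)" by (simp add: e_eq v_def)
  have e100: "e (1, 0, 0) = (Epat K 1 1, 0)" by (simp add: e_eq)
  have e001: "e (0, 0, 1) = (0, 1)" by (simp add: e_eq vec_eq_iff)
  have Dv0: "frechet_derivative H (at (z0, lam0)) (v, 0) = 0" using kerI vVc by blast
  have Ax0: "frechet_derivative A (at p0) (0, 1, 0) = 0"
    by (simp add: DA ep0 e010 Dv0 \<pi>2_def)
  have Bxp0: "Bx p0 = 0"
    by (simp add: Bx_def DB ep0 e010 Dv0 \<pi>12_def)
  have Cp0: "C p0 = 0" using Bxp0 by (simp add: C_def p0_def hc_zero)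
  define As where "As = frechet_derivative A (at p0) (1, 0, 0)"
  define Al where "Al = frechet_derivative A (at p0) (0, 0, 1)"
  have Asnz: "As \<noteq> 0"
  proof
    assume As0: "As = 0"
    let ?d = "frechet_derivative H (at (z0, lam0)) (Epat K 1 1, 0)"
    have pat: "?d $ i $ j = ?d $ i0 $ j2" for i j
    proof (rule pattern_deriv[OF dH])
      fix t :: real
      have "(z0, lam0) + t *\<^sub>R (Epat K 1 1, 0) = e (s0 + t, 0, lam0)"
        by (simp add: e_eq z0E vec_eq_iff)
      then show "H ((z0, lam0) + t *\<^sub>R (Epat K 1 1, 0)) $ i $ j = H ((z0, lam0) + t *\<^sub>R (Epat K 1 1, 0)) $ i0 $ j2"
        using adm_sync[of "\<lambda>z. G z lam0" K "s0 + t" i j i0 j2] adm by (simp add: He)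
    qed
    have "?d $ i0 $ j2 = 0" using As0 by (simp add: As_def DA ep0 e100 \<pi>2_def)
    then have "?d = 0" using pat by (simp add: vec_eq_iff)
    then have "(Epat K 1 1 :: ('m, 'n) arr) \<in> Vc" using kerI by blast
    then have "(\<Sum>j\<in>(UNIV::'n set). (1::real)) = 0" unfolding Vc_def by simp
    then show False by simp
  qed
  define Cs where "Cs = frechet_derivative C (at p0) (1, 0, 0)"
  define Cx where "Cx = frechet_derivative C (at p0) (0, 1, 0)"
  define Cl where "Cl = frechet_derivative C (at p0) (0, 0, 1)"
  have linDA: "linear (frechet_derivative A (at p))" for p using C1_bl[OF C1A] bounded_linear.linear by blast
  have linDC: "linear (frechet_derivative C (at p))" for p using C1_bl[OF C1C] bounded_linear.linear by blast
  have DAp0: "frechet_derivative A (at p0) u = fst u * As + snd (snd u) * Al" for u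
    using lin3[OF linDA, of p0 u] Ax0 by (simp add: As_def Al_def)
  have DCp0: "frechet_derivative C (at p0) u = fst u * Cs + fst (snd u) * Cx + snd (snd u) * Cl" for u
    using lin3[OF linDC, of p0 u] by (simp add: Cs_def Cx_def Cl_def)
  \<comment> \<open>synchronous branch\<close>
  define L2 where "L2 q = (fst q, 0::real, snd q)" for q :: "real \<times> real"
  have blL2: "bounded_linear L2" unfolding L2_def[abs_def] by (auto intro!: bounded_linear_intros)
  define f2 where "f2 q = (A (L2 q), snd q)" for q
  have C1f2: "C1 f2"
    unfolding f2_def[abs_def] by (intro C1_pair C1_comp_lin[OF C1A blL2] C1_lin bounded_linear_snd)
  have Df2: "frechet_derivative f2 (at q) u = (frechet_derivative A (at (L2 q)) (L2 u), snd u)" for q u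
    unfolding f2_def[abs_def]
    by (simp add: C1_pair(2)[OF C1_comp_lin(1)[OF C1A blL2] C1_lin(1)[OF bounded_linear_snd]]
                  C1_comp_lin(2)[OF C1A blL2] C1_lin(2)[OF bounded_linear_snd])
  define x0 where "x0 = (s0, lam0)"
  have L2x0: "L2 x0 = p0" by (simp add: L2_def x0_def p0_def)
  define J2 where "J2 y = ((1 / As) * (fst y - Al * snd y), snd y)" for y :: "real \<times> real"
  have blJ2: "bounded_linear J2" unfolding J2_def[abs_def]
    by (intro bounded_linear_Pair bounded_linear_const_mult bounded_linear_sub bounded_linear_fst bounded_linear_snd)
  have J2inv: "J2 (frechet_derivative f2 (at x0) u) = u" for u
  proof -
    have "frechet_derivative f2 (at x0) u = (frechet_derivative A (at p0) (L2 u), snd u)"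
      by (simp only: Df2 L2x0)
    also have "\<dots> = (fst u * As + snd u * Al, snd u)" by (simp add: DAp0 L2_def)
    finally show ?thesis using Asnz by (simp add: J2_def field_simps)
  qed
  obtain V2 g2 where V2: "open V2" "f2 x0 \<in> V2" "\<And>y. y \<in> V2 \<Longrightarrow> f2 (g2 y) = y" "g2 (f2 x0) = x0"
    "continuous_on V2 g2" "\<And>y. y \<in> V2 \<Longrightarrow> g2 differentiable (at y)"
    by (rule ift[OF C1f2 blJ2 J2inv]) blast
  have f2x0: "f2 x0 = (0, lam0)" using Ap0 by (simp add: f2_def L2x0) (simp add: x0_def)
  define W where "W = {l. (0::real, l) \<in> V2}"
  have openW: "open W"
  proof -
    have "continuous_on UNIV (\<lambda>l::real. (0::real, l))" by (intro continuous_intros)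
    then show ?thesis unfolding W_def using open_vimage[OF V2(1)] by (simp add: vimage_def)
  qed
  have lam0W: "lam0 \<in> W" using V2(2) f2x0 by (simp add: W_def)
  define \<sigma> where "\<sigma> l = (if (0, l) \<in> V2 then fst (g2 (0, l)) else s0)" for l
  have g2W: "g2 (0, l) = (\<sigma> l, l)" and AW: "A (\<sigma> l, 0, l) = 0" if "l \<in> W" for l
  proof -
    have in2: "(0, l) \<in> V2" using that by (simp add: W_def)
    have "f2 (g2 (0, l)) = (0, l)" using V2(3)[OF in2] .
    then have "snd (g2 (0, l)) = l" "A (L2 (g2 (0, l))) = 0" by (simp_all add: f2_def)
    then show "g2 (0, l) = (\<sigma> l, l)" using in2 by (simp add: \<sigma>_def prod_eq_iff)
    with \<open>A (L2 (g2 (0, l))) = 0\<close> show "A (\<sigma> l, 0, l) = 0" by (simp add: L2_def)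
  qed
  have \<sigma>0: "\<sigma> lam0 = s0"
    using g2W[OF lam0W] V2(4) f2x0 by (simp add: x0_def)
  obtain \<sigma>' where d\<sigma>: "(\<sigma> has_real_derivative \<sigma>') (at lam0)"
  proof -
    have gd: "g2 differentiable (at (0, lam0))" using V2(6) V2(2) f2x0 by simp
    then obtain g2' where g2': "(g2 has_derivative g2') (at (0, lam0))" using differentiable_def by blast
    have "((\<lambda>l. (0::real, l)) has_derivative (\<lambda>h. (0, h))) (at lam0)" by (auto intro!: derivative_eq_intros)
    from has_derivative_compose[OF this g2']
    have "((\<lambda>l. g2 (0, l)) has_derivative (\<lambda>h. g2' (0, h))) (at lam0)" .
    then have "((\<lambda>l. fst (g2 (0, l))) has_derivative (\<lambda>h. fst (g2' (0, h)))) (at lam0)"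
      by (rule bounded_linear.has_derivative[OF bounded_linear_fst])
    from hd_real[OF this]
    have "((\<lambda>l. fst (g2 (0, l))) has_real_derivative fst (g2' (0, 1))) (at lam0)" .
    then have "(\<sigma> has_real_derivative fst (g2' (0, 1))) (at lam0)"
      by (rule has_field_derivative_transform_within_open[OF _ openW lam0W]) (simp add: \<sigma>_def W_def)
    then show thesis by (rule that)
  qed
  have \<sigma>rel: "\<sigma>' * As + Al = 0"
  proof -
    have "((\<lambda>l. A (\<sigma> l, (\<lambda>_. 0) l, (\<lambda>l. l) l)) has_real_derivative frechet_derivative A (at (\<sigma> lam0, 0, lam0)) (\<sigma>', 0, 1)) (at lam0)"
      by (rule curve_comp[OF C1A d\<sigma>]) (auto intro!: derivative_eq_intros)
    then have "((\<lambda>l. A (\<sigma> l, 0, l)) has_real_derivative \<sigma>' * As + Al) (at lam0)"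
      using \<sigma>0 by (simp add: p0_def[symmetric] DAp0)
    then show ?thesis by (rule deriv_zero_open[OF _ openW lam0W]) (rule AW)
  qed
  have cont\<sigma>: "continuous (at lam0) \<sigma>" using d\<sigma> by (rule DERIV_continuous)
  define zs where "zs l = (Epat K (\<sigma> l) (\<sigma> l) :: ('m, 'n) arr)" for l
  have E11: "Epat K s s = s *\<^sub>R (Epat K 1 1 :: ('m, 'n) arr)" for s by (simp add: vec_eq_iff)
  have zs0: "zs lam0 = z0" by (simp add: zs_def \<sigma>0 z0E)
  have zscont: "continuous (at lam0) zs"
    unfolding zs_def E11[of "\<sigma> _"] by (intro continuous_intros cont\<sigma>)
  have zsVs: "zs l \<in> Vs" for l by (simp add: zs_def Vs_def)
  have zseq: "\<forall>\<^sub>F l in at lam0. G (zs l) l = 0"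
  proof -
    have "\<forall>\<^sub>F l in at lam0. l \<in> W" using openW lam0W eventually_at_topological by blast
    then show ?thesis
    proof (rule eventually_mono)
      fix l assume "l \<in> W"
      from equil[OF AW[OF this] Bzero[of "\<sigma> l" l]]
      show "G (zs l) l = 0" by (simp add: zs_def)
    qed
  qed
  define M where "M = mm * kk * (nn - kk)"
  have innerC: "inner (frechet_derivative (\<lambda>z. G z l) (at (Epat K s s)) v) v = M * C (s, 0, l)" for s l
  proof -
    define w where "w = frechet_derivative H (at (Epat K s s, l)) (v, 0)"
    have wdef: "frechet_derivative (\<lambda>z. G z l) (at (Epat K s s)) v = w" using DHz by (simp add: w_def)
    have pat: "w $ i $ j = w $ i0 $ (if j \<in> K then j1 else j2)" for i j
      unfolding w_def
    proof (rule pattern_deriv[OF dH])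
      fix t :: real
      have eqe: "(Epat K s s, l) + t *\<^sub>R (v, 0) = e (s, t, l)"
        by (simp add: e_eq v_def vec_eq_iff mult.commute)
      have memb: "(j \<in> K) = ((if j \<in> K then j1 else j2) \<in> K)" using j1 j2 by auto
      show "H ((Epat K s s, l) + t *\<^sub>R (v, 0)) $ i $ j = H ((Epat K s s, l) + t *\<^sub>R (v, 0)) $ i0 $ (if j \<in> K then j1 else j2)"
      proof -
        have a: "admissible (\<lambda>z. G z l)" using adm by blast
        have "G (Epat K (s + (nn - kk) * t) (s - kk * t)) l $ i $ j = G (Epat K (s + (nn - kk) * t) (s - kk * t)) l $ i0 $ (if j \<in> K then j1 else j2)"
          using adm_pattern[OF a memb, of "s + (nn - kk) * t" "s - kk * t" i i0] by simp
        then show ?thesis by (simp only: eqe He)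
      qed
    qed
    have "inner w v = (\<Sum>i\<in>UNIV. \<Sum>j\<in>UNIV. w $ i $ j * v $ i $ j)"
      by (simp add: inner_vec_def)
    also have "\<dots> = (\<Sum>i\<in>(UNIV::'m set). \<Sum>j\<in>UNIV. if j \<in> K then w $ i0 $ j1 * (nn - kk) else w $ i0 $ j2 * (- kk))"
    proof (intro sum.cong refl)
      fix i j
      show "w $ i $ j * v $ i $ j = (if j \<in> K then w $ i0 $ j1 * (nn - kk) else w $ i0 $ j2 * (- kk))"
        using pat[of i j] by (cases "j \<in> K") (simp_all add: v_def)
    qed
    also have "\<dots> = (\<Sum>i\<in>(UNIV::'m set). kk * (w $ i0 $ j1 * (nn - kk)) + (nn - kk) * (w $ i0 $ j2 * (- kk)))"
      using sum_pattern[of K] card_mono[of UNIV K] by (simp add: kk_def nn_def of_nat_diff)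
    also have "\<dots> = M * (w $ i0 $ j1 - w $ i0 $ j2)"
      by (simp add: M_def mm_def algebra_simps)
    also have "w $ i0 $ j1 - w $ i0 $ j2 = Bx (s, 0, l)"
      by (simp add: Bx_def DB e_eq w_def \<pi>12_def v_def)
    also have "\<dots> = C (s, 0, l)" by (simp add: C_def hc_zero)
    finally show ?thesis using wdef by simp
  qed
  have P: "zs lam0 = z0 \<and> continuous (at lam0) zs \<and> (\<forall>l. zs l \<in> Vs)
            \<and> (\<forall>\<^sub>F l in at lam0. G (zs l) l = 0) \<and> v \<in> Vc \<and> v \<noteq> 0"
    using zs0 zscont zsVs zseq vVc vnz by blast
  obtain d where dnz: "d \<noteq> 0"
    and dd: "((\<lambda>l. inner (frechet_derivative (\<lambda>z. G z l) (at (zs l)) v) v) has_real_derivative d) (at lam0)"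
    using generic[rule_format, OF P] by blast
  have "((\<lambda>l. C (\<sigma> l, (\<lambda>_. 0) l, (\<lambda>l. l) l)) has_real_derivative frechet_derivative C (at (\<sigma> lam0, 0, lam0)) (\<sigma>', 0, 1)) (at lam0)"
    by (rule curve_comp[OF C1C d\<sigma>]) (auto intro!: derivative_eq_intros)
  then have "((\<lambda>l. C (\<sigma> l, 0, l)) has_real_derivative \<sigma>' * Cs + Cl) (at lam0)"
    using \<sigma>0 by (simp add: p0_def[symmetric] DCp0)
  then have "((\<lambda>l. M * C (\<sigma> l, 0, l)) has_real_derivative M * (\<sigma>' * Cs + Cl)) (at lam0)"
    by (rule DERIV_cmult)
  moreover have "(\<lambda>l. inner (frechet_derivative (\<lambda>z. G z l) (at (zs l)) v) v) = (\<lambda>l. M * C (\<sigma> l, 0, l))"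
    by (simp add: zs_def innerC)
  ultimately have "d = M * (\<sigma>' * Cs + Cl)" using dd DERIV_unique by metis
  then have nz1: "\<sigma>' * Cs + Cl \<noteq> 0" using dnz by auto
  define Det where "Det = As * Cl - Al * Cs"
  have Detnz: "Det \<noteq> 0"
  proof -
    have "Al = - (\<sigma>' * As)" using \<sigma>rel by linarith
    then have "Det = As * (\<sigma>' * Cs + Cl)" by (simp add: Det_def algebra_simps)
    then show ?thesis using Asnz nz1 by simp
  qed
  define \<Psi> where "\<Psi> p = (A p, fst (snd p), C p)" for p :: "real \<times> real \<times> real"
  have blfs: "bounded_linear (\<lambda>p::real \<times> real \<times> real. fst (snd p))"
    by (rule bounded_linear_compose[OF bounded_linear_fst bounded_linear_snd])
  have C1\<Psi>: "C1 \<Psi>"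
    unfolding \<Psi>_def[abs_def] by (intro C1_pair C1A C1C C1_lin(1)[OF blfs])
  have D\<Psi>: "frechet_derivative \<Psi> (at p) u = (frechet_derivative A (at p) u, fst (snd u), frechet_derivative C (at p) u)" for p u
    unfolding \<Psi>_def[abs_def]
    by (simp add: C1_pair(2)[OF C1A C1_pair(1)[OF C1_lin(1)[OF blfs] C1C]]
                  C1_pair(2)[OF C1_lin(1)[OF blfs] C1C] C1_lin(2)[OF blfs])
  define J where "J y = ((1 / Det) * (Cl * fst y - Al * (snd (snd y) - Cx * fst (snd y))), fst (snd y),
                         (1 / Det) * (As * (snd (snd y) - Cx * fst (snd y)) - Cs * fst y))" for y :: "real \<times> real \<times> real"
  have blJ: "bounded_linear J"
    unfolding J_def[abs_def] by (intro bounded_linear_intros)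
  have Jinv: "J (frechet_derivative \<Psi> (at p0) u) = u" for u
  proof -
    obtain u1 u2 u3 where u: "u = (u1, u2, u3)" by (cases u) auto
    have "frechet_derivative \<Psi> (at p0) u = (u1 * As + u3 * Al, u2, u1 * Cs + u2 * Cx + u3 * Cl)"
      by (simp add: D\<Psi> DAp0 DCp0 u)
    then show ?thesis using Detnz by (simp add: J_def u Det_def field_simps)
  qed
  obtain V g where V: "open V" "\<Psi> p0 \<in> V" "\<And>y. y \<in> V \<Longrightarrow> \<Psi> (g y) = y" "g (\<Psi> p0) = p0"
    "continuous_on V g" "\<And>y. y \<in> V \<Longrightarrow> g differentiable (at y)"
    by (rule ift[OF C1\<Psi> blJ Jinv]) blast
  have \<Psi>p0: "\<Psi> p0 = (0, 0, 0)" using Ap0 Cp0 by (simp add: \<Psi>_def p0_def)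
  obtain \<epsilon> where \<epsilon>: "\<epsilon> > 0" "ball (0, 0, 0) \<epsilon> \<subseteq> V"
    using V(1) V(2) \<Psi>p0 open_contains_ball by metis
  define I where "I = {-\<epsilon><..<\<epsilon>}"
  have openI: "open I" by (simp add: I_def)
  have inI0: "0 \<in> I" using \<epsilon> by (simp add: I_def)
  have inV: "(0, t, 0) \<in> V" if "t \<in> I" for t
  proof -
    have "dist (0, 0, 0) (0::real, t, 0::real) = \<bar>t\<bar>" by (simp add: dist_norm)
    then show ?thesis using that \<epsilon>(2) by (auto simp: I_def)
  qed
  define S where "S t = fst (g (0, t, 0))" for t
  define \<Lambda> where "\<Lambda> t = snd (snd (g (0, t, 0)))" for t
  have gI: "g (0, t, 0) = (S t, t, \<Lambda> t)" and AI: "A (S t, t, \<Lambda> t) = 0" and CI: "C (S t, t, \<Lambda> t) = 0"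
    if "t \<in> I" for t
  proof -
    have "\<Psi> (g (0, t, 0)) = (0, t, 0)" using V(3)[OF inV[OF that]] .
    then have h: "A (g (0, t, 0)) = 0" "fst (snd (g (0, t, 0))) = t" "C (g (0, t, 0)) = 0"
      by (simp_all add: \<Psi>_def)
    show g: "g (0, t, 0) = (S t, t, \<Lambda> t)" using h(2) by (simp add: S_def \<Lambda>_def prod_eq_iff)
    show "A (S t, t, \<Lambda> t) = 0" using h(1) g by simp
    show "C (S t, t, \<Lambda> t) = 0" using h(3) g by simp
  qed
  have g0: "g (0, 0, 0) = p0" using V(4) \<Psi>p0 by simp
  have S0: "S 0 = s0" and \<Lambda>0: "\<Lambda> 0 = lam0" using g0 by (simp_all add: S_def \<Lambda>_def p0_def)
  define z where "z t = (Epat K (S t + (nn - kk) * t) (S t - kk * t) :: ('m, 'n) arr)" for t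
  have zeq: "G (z t) (\<Lambda> t) = 0" if "t \<in> I" for t
  proof -
    have "B (S t, t, \<Lambda> t) = 0" using hadB CI[OF that] by simp
    from equil[OF AI[OF that] this] show ?thesis by (simp add: z_def)
  qed
  have z0: "z 0 = z0" by (simp add: z_def S0 z0E)
  have EpatLin: "Epat K p q = p *\<^sub>R E10 + q *\<^sub>R E01" for p q
    by (simp add: E10_def E01_def vec_eq_iff)
  have contg: "continuous_on I (\<lambda>t. g (0, t, 0))"
  proof -
    have "continuous_on I (\<lambda>t::real. (0::real, t, 0::real))" by (intro continuous_intros)
    moreover have "(\<lambda>t::real. (0::real, t, 0::real)) ` I \<subseteq> V" using inV by blast
    ultimately show ?thesis using continuous_on_compose2[OF V(5)] by blast
  qed
  have contS: "continuous_on I S" unfolding S_def using contg by (intro continuous_intros)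
  have cont\<Lambda>: "continuous_on I \<Lambda>" unfolding \<Lambda>_def using contg by (intro continuous_intros)
  have contz: "continuous_on I z"
    unfolding z_def EpatLin using contS by (intro continuous_intros)
  obtain S' \<Lambda>' where dS: "(S has_real_derivative S') (at 0)" and d\<Lambda>: "(\<Lambda> has_real_derivative \<Lambda>') (at 0)"
  proof -
    have gd: "g differentiable (at (0, 0, 0))" using V(6) V(2) \<Psi>p0 by simp
    then obtain g' where g': "(g has_derivative g') (at (0, 0, 0))" using differentiable_def by blast
    have "((\<lambda>t. (0::real, t, 0::real)) has_derivative (\<lambda>h. (0, h, 0))) (at 0)" by (auto intro!: derivative_eq_intros)
    from has_derivative_compose[OF this g']
    have c: "((\<lambda>t. g (0, t, 0)) has_derivative (\<lambda>h. g' (0, h, 0))) (at 0)" by simp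
    have "((\<lambda>t. fst (g (0, t, 0))) has_derivative (\<lambda>h. fst (g' (0, h, 0)))) (at 0)"
      by (rule bounded_linear.has_derivative[OF bounded_linear_fst c])
    from hd_real[OF this] have a: "(S has_real_derivative fst (g' (0, 1, 0))) (at 0)" by (simp add: S_def[abs_def])
    have bl3: "bounded_linear (\<lambda>p::real \<times> real \<times> real. snd (snd p))"
      by (rule bounded_linear_compose[OF bounded_linear_snd bounded_linear_snd])
    have "((\<lambda>t. snd (snd (g (0, t, 0)))) has_derivative (\<lambda>h. snd (snd (g' (0, h, 0))))) (at 0)"
      by (rule bounded_linear.has_derivative[OF bl3 c])
    from hd_real[OF this] have b: "(\<Lambda> has_real_derivative snd (snd (g' (0, 1, 0)))) (at 0)" by (simp add: \<Lambda>_def[abs_def])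
    show thesis by (rule that[OF a b])
  qed
  have rel2: "S' * As + \<Lambda>' * Al = 0"
  proof -
    have "((\<lambda>t. A (S t, (\<lambda>t. t) t, \<Lambda> t)) has_real_derivative frechet_derivative A (at (S 0, 0, \<Lambda> 0)) (S', 1, \<Lambda>')) (at 0)"
      by (rule curve_comp[OF C1A dS _ d\<Lambda>]) (auto intro!: derivative_eq_intros)
    then have "((\<lambda>t. A (S t, t, \<Lambda> t)) has_real_derivative S' * As + \<Lambda>' * Al) (at 0)"
      using S0 \<Lambda>0 by (simp add: p0_def[symmetric] DAp0)
    then show ?thesis by (rule deriv_zero_open[OF _ openI inI0]) (rule AI)
  qed
  define h where "h t = S t - \<sigma> (\<Lambda> t)" for t
  have dh: "(h has_real_derivative S' - \<sigma>' * \<Lambda>') (at 0)"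
  proof -
    have "(\<sigma> has_real_derivative \<sigma>') (at (\<Lambda> 0))" using d\<sigma> \<Lambda>0 by simp
    from DERIV_chain2[OF this d\<Lambda>] have "((\<lambda>t. \<sigma> (\<Lambda> t)) has_real_derivative \<sigma>' * \<Lambda>') (at 0)" .
    from DERIV_diff[OF dS this] show ?thesis by (simp add: h_def[abs_def])
  qed
  have hder0: "S' - \<sigma>' * \<Lambda>' = 0"
  proof -
    have "Al = - (\<sigma>' * As)" using \<sigma>rel by linarith
    then have "(S' - \<sigma>' * \<Lambda>') * As = 0" using rel2 by (simp add: algebra_simps)
    then show ?thesis using Asnz by simp
  qed
  have h0: "h 0 = 0" by (simp add: h_def S0 \<Lambda>0 \<sigma>0)
  have hlim: "((\<lambda>t. h t / t) \<longlongrightarrow> 0) (at 0)"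
    using dh hder0 h0 unfolding has_field_derivative_iff by simp
  have tang_eq: "(z t - zs (\<Lambda> t) - t *\<^sub>R v) /\<^sub>R t = (h t / t) *\<^sub>R (Epat K 1 1 :: ('m, 'n) arr)" for t
  proof -
    have "z t - zs (\<Lambda> t) - t *\<^sub>R v = h t *\<^sub>R (Epat K 1 1 :: ('m, 'n) arr)"
      by (simp add: vec_eq_iff z_def zs_def v_def h_def algebra_simps)
    then show ?thesis by (simp add: divide_inverse_commute)
  qed
  have tang: "((\<lambda>t. (z t - zs (\<Lambda> t) - t *\<^sub>R v) /\<^sub>R t) \<longlongrightarrow> 0) (at 0)"
    unfolding tang_eq using tendsto_scaleR[OF hlim tendsto_const, of "Epat K 1 1 :: ('m, 'n) arr"] by simp
  have props: "isotropy (z t) = full_axial_sub K \<and> z t \<in> Fix (axial_sub K) \<and> z t \<in> Fix rowperm_sub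
          \<and> z t \<in> {a + b | a b. a \<in> Vc \<and> b \<in> Vs} \<and> consensus (z t)" if "t \<noteq> 0" for t
  proof -
    have "S t + (nn - kk) * t \<noteq> S t - kk * t"
    proof
      assume "S t + (nn - kk) * t = S t - kk * t"
      then have "nn * t = 0" by (simp add: algebra_simps)
      then show False using that kless kpos by simp
    qed
    then show ?thesis
      unfolding z_def by (intro conjI isotropy_Epat Fix_axial_Epat Fix_rowperm_Epat Epat_decomp consensus_Epat)
  qed
  have c1: "\<forall>t\<in>{-\<epsilon><..<\<epsilon>}. G (z t) (\<Lambda> t) = 0" using zeq unfolding I_def by blast
  have c2: "\<forall>t\<in>{-\<epsilon><..<\<epsilon>}. t \<noteq> 0 \<longrightarrow> isotropy (z t) = full_axial_sub K \<and> z t \<in> Fix (axial_sub K) \<and> z t \<in> Fix rowperm_sub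
          \<and> z t \<in> {a + b | a b. a \<in> Vc \<and> b \<in> Vs} \<and> consensus (z t)"
    using props by blast
  have c3: "continuous_on {-\<epsilon><..<\<epsilon>} z" using contz unfolding I_def .
  have c4: "continuous_on {-\<epsilon><..<\<epsilon>} \<Lambda>" using cont\<Lambda> unfolding I_def .
  have c5: "\<forall>l. zs l \<in> Vs" using zsVs by blast
  show ?thesis
    apply (rule exI[of _ \<epsilon>], rule exI[of _ z], rule exI[of _ \<Lambda>], rule exI[of _ zs], rule exI[of _ v])
    apply (intro conjI)
    by (fact \<epsilon>(1) c3 c4 z0 \<Lambda>0 c1 c2 zs0 zscont c5 zseq vVc vnz tang)+
qed


lemma ex5_conj: "P \<Longrightarrow> (\<exists>a b c d e. Q a b c d e) \<Longrightarrow> (\<exists>a b c d e. P \<and> Q a b c d e)"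
  by blast

theorem theorem7p1:
  fixes G :: "('m::finite, 'n::finite) arr \<Rightarrow> real \<Rightarrow> ('m, 'n) arr"
    and z0 :: "('m, 'n) arr" and lam0 :: real
  assumes m2: "CARD('m) \<ge> 2" and n2: "CARD('n) \<ge> 2"
    and smooth: "smooth_map (\<lambda>p. G (fst p) (snd p))"
    and adm: "\<forall>l. admissible (\<lambda>z. G z l)"
    and sync: "z0 \<in> Vs" and eq: "G z0 lam0 = 0"
    and ker: "{w. frechet_derivative (\<lambda>z. G z lam0) (at z0) w = 0} = Vc"
    and generic:
      "\<forall>zs v. zs lam0 = z0 \<and> continuous (at lam0) zs \<and> (\<forall>l. zs l \<in> Vs)
            \<and> (\<forall>\<^sub>F l in at lam0. G (zs l) l = 0) \<and> v \<in> Vc \<and> v \<noteq> 0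
         \<longrightarrow> (\<exists>d. d \<noteq> 0 \<and>
               ((\<lambda>l. inner (frechet_derivative (\<lambda>z. G z l) (at (zs l)) v) v)
                  has_real_derivative d) (at lam0))"
  shows "\<forall>k. 1 \<le> k \<and> k \<le> CARD('n) - 1 \<longrightarrow>
    (\<exists>K \<epsilon> z lam zs v.
        card K = k \<and> \<epsilon> > 0
      \<and> continuous_on {-\<epsilon><..<\<epsilon>} z \<and> continuous_on {-\<epsilon><..<\<epsilon>} lam
      \<and> z 0 = z0 \<and> lam 0 = lam0
      \<and> (\<forall>t\<in>{-\<epsilon><..<\<epsilon>}. G (z t) (lam t) = 0)
      \<and> (\<forall>t\<in>{-\<epsilon><..<\<epsilon>}. t \<noteq> 0 \<longrightarrow>
            isotropy (z t) = full_axial_sub K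
          \<and> z t \<in> Fix (axial_sub K)
          \<and> z t \<in> Fix rowperm_sub
          \<and> z t \<in> {a + b | a b. a \<in> Vc \<and> b \<in> Vs}
          \<and> consensus (z t))
      \<and> zs lam0 = z0 \<and> continuous (at lam0) zs \<and> (\<forall>l. zs l \<in> Vs)
      \<and> (\<forall>\<^sub>F l in at lam0. G (zs l) l = 0)
      \<and> v \<in> Vc \<and> v \<noteq> 0
      \<and> ((\<lambda>t. (z t - zs (lam t) - t *\<^sub>R v) /\<^sub>R t) \<longlongrightarrow> 0) (at 0))"
proof (intro allI impI)
  fix k assume k: "1 \<le> k \<and> k \<le> CARD('n) - 1"
  have "k \<le> card (UNIV :: 'n set)" using k by arith
  then obtain K :: "'n set" where cK: "card K = k"
    using obtain_subset_with_card_n[of k "UNIV :: 'n set"] by blast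
  have "K \<noteq> {}" using cK k by auto
  then obtain j1 where j1: "j1 \<in> K" by blast
  have "K \<noteq> UNIV"
  proof
    assume "K = UNIV"
    then have "k = CARD('n)" using cK by simp
    then show False using k n2 by arith
  qed
  then obtain j2 where j2: "j2 \<notin> K" by blast
  from main_branch[OF smooth adm sync eq ker generic j1 j2]
  show "\<exists>K \<epsilon> z lam zs v.
        card K = k \<and> \<epsilon> > 0
      \<and> continuous_on {-\<epsilon><..<\<epsilon>} z \<and> continuous_on {-\<epsilon><..<\<epsilon>} lam
      \<and> z 0 = z0 \<and> lam 0 = lam0
      \<and> (\<forall>t\<in>{-\<epsilon><..<\<epsilon>}. G (z t) (lam t) = 0)
      \<and> (\<forall>t\<in>{-\<epsilon><..<\<epsilon>}. t \<noteq> 0 \<longrightarrow>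
            isotropy (z t) = full_axial_sub K
          \<and> z t \<in> Fix (axial_sub K)
          \<and> z t \<in> Fix rowperm_sub
          \<and> z t \<in> {a + b | a b. a \<in> Vc \<and> b \<in> Vs}
          \<and> consensus (z t))
      \<and> zs lam0 = z0 \<and> continuous (at lam0) zs \<and> (\<forall>l. zs l \<in> Vs)
      \<and> (\<forall>\<^sub>F l in at lam0. G (zs l) l = 0)
      \<and> v \<in> Vc \<and> v \<noteq> 0
      \<and> ((\<lambda>t. (z t - zs (lam t) - t *\<^sub>R v) /\<^sub>R t) \<longlongrightarrow> 0) (at 0)"
    by (intro exI[of _ K] ex5_conj[OF cK])
qed

end
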